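(* Let $\mathfrak a$ be a primary monomial ideal in a polynomial ring $\Bbbk[x_1,\ldots,x_n]$ over a field $\Bbbk$, and let $I'$ be a polarization of $\mathfrak a$. Then the Stanley--Reisner complex of $I'$ is vertex-decomposable.
   Context: A monomial ideal $\mathfrak a$ is primary if $R/\mathfrak a$ has a unique associated prime; equivalently, if $\mathfrak p=\sqrt{\mathfrak a}$ (generated by a subset of the variables) and no minimal monomial generator of $\mathfrak a$ is divisible by a variable not in $\mathfrak p$. A polarization of a monomial ideal $\mathfrak a$ is the squarefree monomial ideal in a polynomial ring with variables $x_{i,j}$ generated by the monomials $\prod_{i=1}^n\prod_{j=1}^{a_i}x_{i,j}$, one for each minimal monomial generator $x_1^{a_1}\cdots x_n^{a_n}$ of $\mathfrak a$. The Stanley--Reisner complex of a squarefree monomial ideal $I$ on vertex set $V$ (the variables) is the simplicial complex of subsets $F\subseteq V$ with $\prod_{x\in F}x\notin I$. For a simplicial complex $\Delta$ on $V$ and $x\in V$: $\operatorname{del}_\Delta(x)=\Delta|_{V\setminus\{x\}}=\{F\in\Delta: x\notin F\}$ and $\operatorname{link}_\Delta(x)=\{F\in\Delta: x\notin F,\ F\cup\{x\}\in\Delta\}$. A $d$-dimensional simplicial complex $\Delta$ is vertex-decomposable if it is pure and either $\Delta$ is a $d$-simplex, or there is a vertex $x$ such that $\operatorname{link}_\Delta(x)$ is $(d-1)$-dimensional and vertex-decomposable and $\operatorname{del}_\Delta(x)$ is $d$-dimensional and vertex-decomposable. *)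

theory Defs
  imports Main
begin

text \<open>A monomial x_1^a_1 ... x_n^a_n is represented by its exponent vector
  a :: nat => nat with a i = 0 for i outside {1..n}.  A monomial ideal is
  determined by the set of monomials it contains; this set is closed under
  multiplication by monomials (i.e. upward closed w.r.t. divisibility).
  The ideal is proper iff it does not contain the monomial 1.\<close>

definition monomials :: "nat \<Rightarrow> (nat \<Rightarrow> nat) set" where
  "monomials n = {a. \<forall>i. i \<notin> {1..n} \<longrightarrow> a i = 0}"

definition mon_dvd :: "(nat \<Rightarrow> nat) \<Rightarrow> (nat \<Rightarrow> nat) \<Rightarrow> bool" where
  "mon_dvd a b \<longleftrightarrow> (\<forall>i. a i \<le> b i)"

definition monomial_ideal :: "nat \<Rightarrow> (nat \<Rightarrow> nat) set \<Rightarrow> bool" where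
  "monomial_ideal n A \<longleftrightarrow> A \<subseteq> monomials n \<and>
     (\<forall>a\<in>A. \<forall>b\<in>monomials n. mon_dvd a b \<longrightarrow> b \<in> A)"

definition min_gens :: "(nat \<Rightarrow> nat) set \<Rightarrow> (nat \<Rightarrow> nat) set" where
  "min_gens A = {a \<in> A. \<forall>b\<in>A. mon_dvd b a \<longrightarrow> b = a}"

definition mon_radical :: "(nat \<Rightarrow> nat) set \<Rightarrow> (nat \<Rightarrow> nat) set" where
  "mon_radical A = {m. \<exists>k\<ge>1. (\<lambda>i. k * m i) \<in> A}"

text \<open>Primary monomial ideal: the radical is generated by a set P of variables
  (i.e. a monomial lies in the radical iff it is divisible by some x_i, i in P),
  and no minimal generator is divisible by a variable outside P.\<close>
definition primary_monomial_ideal :: "nat \<Rightarrow> (nat \<Rightarrow> nat) set \<Rightarrow> bool" where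
  "primary_monomial_ideal n A \<longleftrightarrow> monomial_ideal n A \<and>
     (\<lambda>_. 0) \<notin> A \<and>
     (\<exists>P\<subseteq>{1..n}.
        (\<forall>m\<in>monomials n. m \<in> mon_radical A \<longleftrightarrow> (\<exists>i\<in>P. 0 < m i)) \<and>
        (\<forall>g\<in>min_gens A. \<forall>i. i \<notin> P \<longrightarrow> g i = 0))"

text \<open>Squarefree monomials in the variables x_{i,j} are represented by sets of
  index pairs (i,j).\<close>
definition polarize_mon :: "nat \<Rightarrow> (nat \<Rightarrow> nat) \<Rightarrow> (nat \<times> nat) set" where
  "polarize_mon n a = {(i, j). i \<in> {1..n} \<and> 1 \<le> j \<and> j \<le> a i}"

definition polarization_gens :: "nat \<Rightarrow> (nat \<Rightarrow> nat) set \<Rightarrow> (nat \<times> nat) set set" where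
  "polarization_gens n A = polarize_mon n ` min_gens A"

definition polarization_vars :: "nat \<Rightarrow> (nat \<Rightarrow> nat) set \<Rightarrow> (nat \<times> nat) set" where
  "polarization_vars n A = \<Union> (polarization_gens n A)"

text \<open>For a squarefree monomial ideal given by squarefree generators G on vertex
  set V: a squarefree monomial prod_{x in F} x lies in the ideal iff it is
  divisible by some generator.\<close>
definition sqfree_in_ideal :: "'v set set \<Rightarrow> 'v set \<Rightarrow> bool" where
  "sqfree_in_ideal G F \<longleftrightarrow> (\<exists>g\<in>G. g \<subseteq> F)"

definition stanley_reisner :: "'v set \<Rightarrow> 'v set set \<Rightarrow> 'v set set" where
  "stanley_reisner V G = {F. F \<subseteq> V \<and> \<not> sqfree_in_ideal G F}"

definition sc_dim :: "'v set set \<Rightarrow> int" where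
  "sc_dim \<Delta> = int (Max (card ` \<Delta>)) - 1"

definition facets :: "'v set set \<Rightarrow> 'v set set" where
  "facets \<Delta> = {F \<in> \<Delta>. \<forall>G\<in>\<Delta>. F \<subseteq> G \<longrightarrow> G = F}"

definition pure :: "'v set set \<Rightarrow> bool" where
  "pure \<Delta> \<longleftrightarrow> (\<forall>F\<in>facets \<Delta>. int (card F) - 1 = sc_dim \<Delta>)"

definition del :: "'v set set \<Rightarrow> 'v \<Rightarrow> 'v set set" where
  "del \<Delta> x = {F \<in> \<Delta>. x \<notin> F}"

definition link :: "'v set set \<Rightarrow> 'v \<Rightarrow> 'v set set" where
  "link \<Delta> x = {F \<in> \<Delta>. x \<notin> F \<and> insert x F \<in> \<Delta>}"

text \<open>A simplex is the power set of a finite set (the (-1)-simplex is {{}}).\<close>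
inductive vertex_decomposable :: "'v set set \<Rightarrow> bool" where
  simplex: "finite F \<Longrightarrow> vertex_decomposable (Pow F)"
| step: "\<lbrakk> pure \<Delta>; {x} \<in> \<Delta>;
           sc_dim (link \<Delta> x) = sc_dim \<Delta> - 1; vertex_decomposable (link \<Delta> x);
           sc_dim (del \<Delta> x) = sc_dim \<Delta>; vertex_decomposable (del \<Delta> x) \<rbrakk>
         \<Longrightarrow> vertex_decomposable \<Delta>"

end

theory Submission
  imports Defs
begin

definition rowv :: "'i set \<Rightarrow> ('i \<Rightarrow> nat \<Rightarrow> 'v) \<Rightarrow> ('i \<Rightarrow> nat) \<Rightarrow> 'v set" where
  "rowv P r L = (\<lambda>(i,j). r i j) ` (SIGMA i:P. {..<L i})"

definition Vx :: "'v set \<Rightarrow> 'i set \<Rightarrow> ('i \<Rightarrow> nat \<Rightarrow> 'v) \<Rightarrow> ('i \<Rightarrow> nat) \<Rightarrow> 'v set" where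
  "Vx C P r L = C \<union> rowv P r L"

definition Kc :: "'v set \<Rightarrow> 'i set \<Rightarrow> ('i \<Rightarrow> nat \<Rightarrow> 'v) \<Rightarrow> ('i \<Rightarrow> nat) \<Rightarrow> ('i \<Rightarrow> nat) set \<Rightarrow> 'v set set" where
  "Kc C P r L S = {F. F \<subseteq> Vx C P r L \<and> (\<exists>b\<in>S. \<forall>i\<in>P. r i (b i) \<notin> F)}"

definition wfK :: "'v set \<Rightarrow> 'i set \<Rightarrow> ('i \<Rightarrow> nat \<Rightarrow> 'v) \<Rightarrow> ('i \<Rightarrow> nat) \<Rightarrow> ('i \<Rightarrow> nat) set \<Rightarrow> bool" where
  "wfK C P r L S \<longleftrightarrow> finite C \<and> finite P \<and> inj_on (\<lambda>(i,j). r i j) (SIGMA i:P. {..<L i}) \<and>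
     C \<inter> rowv P r L = {} \<and> S \<noteq> {} \<and> (\<forall>b\<in>S. \<forall>i\<in>P. b i < L i) \<and>
     (\<forall>b\<in>S. \<forall>i\<in>P. \<forall>k\<le>b i. b(i:=k) \<in> S)"

lemma inj_r:
  assumes "wfK C P r L S" "i \<in> P" "k \<in> P" "j < L i" "j' < L k" "r i j = r k j'"
  shows "i = k \<and> j = j'"
  using assms unfolding wfK_def inj_on_def by fastforce

lemma finite_V: "wfK C P r L S \<Longrightarrow> finite (Vx C P r L)"
  unfolding wfK_def Vx_def rowv_def by auto

lemma X_sub: "wfK C P r L S \<Longrightarrow> b \<in> S \<Longrightarrow> (\<lambda>k. r k (b k)) ` P \<subseteq> Vx C P r L"
  unfolding wfK_def Vx_def rowv_def by force

lemma card_X: assumes "wfK C P r L S" "b \<in> S"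
  shows "card ((\<lambda>k. r k (b k)) ` P) = card P"
proof -
  have "inj_on (\<lambda>k. r k (b k)) P"
    using assms inj_r[OF assms(1)] unfolding inj_on_def wfK_def by blast
  thus ?thesis by (simp add: card_image)
qed

lemma card_facet: assumes "wfK C P r L S" "b \<in> S"
  shows "card (Vx C P r L - (\<lambda>k. r k (b k)) ` P) = card (Vx C P r L) - card P"
  using assms card_X[OF assms] X_sub[OF assms] finite_V[OF assms(1)]
  by (simp add: card_Diff_subset finite_subset)

lemma facet_in: assumes "wfK C P r L S" "b \<in> S"
  shows "Vx C P r L - (\<lambda>k. r k (b k)) ` P \<in> Kc C P r L S"
  using assms unfolding Kc_def by blast

lemma face_le: assumes "wfK C P r L S" "F \<in> Kc C P r L S"
  shows "\<exists>b\<in>S. F \<subseteq> Vx C P r L - (\<lambda>k. r k (b k)) ` P"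
  using assms unfolding Kc_def by blast

lemma dimK: assumes "wfK C P r L S"
  shows "sc_dim (Kc C P r L S) = int (card (Vx C P r L)) - int (card P) - 1"
proof -
  obtain b where b: "b \<in> S" using assms unfolding wfK_def by blast
  have fin: "finite (Kc C P r L S)"
  proof (rule finite_subset)
    show "Kc C P r L S \<subseteq> Pow (Vx C P r L)" by (auto simp: Kc_def)
  qed (use finite_V[OF assms] in simp)
  hence fin2: "finite (card ` Kc C P r L S)" by simp
  have le: "\<forall>c\<in>card ` Kc C P r L S. c \<le> card (Vx C P r L) - card P"
  proof
    fix c assume "c \<in> card ` Kc C P r L S"
    then obtain F where F: "F \<in> Kc C P r L S" "c = card F" by blast
    obtain b' where "b' \<in> S" "F \<subseteq> Vx C P r L - (\<lambda>k. r k (b' k)) ` P"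
      using face_le[OF assms F(1)] by blast
    thus "c \<le> card (Vx C P r L) - card P"
      using F card_facet[OF assms] card_mono finite_V[OF assms]
      by (metis finite_Diff)
  qed
  have mem: "card (Vx C P r L) - card P \<in> card ` Kc C P r L S"
    using facet_in[OF assms b] card_facet[OF assms b] by (metis image_eqI)
  have "Max (card ` Kc C P r L S) = card (Vx C P r L) - card P"
    using fin2 le mem by (meson Max_eqI)
  moreover have "card P \<le> card (Vx C P r L)"
    using card_X[OF assms b] X_sub[OF assms b] finite_V[OF assms] card_mono by metis
  ultimately show ?thesis unfolding sc_dim_def by simp
qed

lemma pureK: assumes "wfK C P r L S"
  shows "pure (Kc C P r L S)"
  unfolding pure_def
proof
  fix F assume F: "F \<in> facets (Kc C P r L S)"
  hence FK: "F \<in> Kc C P r L S" unfolding facets_def by blast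
  obtain b where b: "b \<in> S" "F \<subseteq> Vx C P r L - (\<lambda>k. r k (b k)) ` P"
    using face_le[OF assms FK] by blast
  have "F = Vx C P r L - (\<lambda>k. r k (b k)) ` P"
    using F facet_in[OF assms b(1)] b(2) unfolding facets_def by blast
  hence "card F = card (Vx C P r L) - card P" using card_facet[OF assms b(1)] by simp
  moreover have "card P \<le> card (Vx C P r L)"
    using card_X[OF assms b(1)] X_sub[OF assms b(1)] finite_V[OF assms] card_mono by metis
  ultimately show "int (card F) - 1 = sc_dim (Kc C P r L S)"
    using dimK[OF assms] by simp
qed


lemma L_pos: "wfK C P r L S \<Longrightarrow> i \<in> P \<Longrightarrow> 0 < L i"
  unfolding wfK_def by fastforce

lemma del_V: assumes "wfK C P r L S" "i \<in> P"
  shows "Vx (C \<union> r i ` {1..<L i}) (P - {i}) r L = Vx C P r L - {r i 0}"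
proof -
  have Lp: "0 < L i" using L_pos[OF assms] .
  have x1: "r i 0 \<notin> C" using assms Lp unfolding wfK_def rowv_def by force
  have x2: "r i 0 \<notin> r i ` {1..<L i}" using inj_r[OF assms(1) assms(2) assms(2) Lp] by force
  have x3: "r i 0 \<notin> rowv (P - {i}) r L"
    using inj_r[OF assms(1) _ assms(2) _ Lp] unfolding rowv_def by force
  have "r i ` {1..<L i} \<union> rowv (P - {i}) r L \<union> {r i 0} = rowv P r L"
  proof -
    have "rowv P r L = rowv (P - {i}) r L \<union> (\<lambda>j. r i j) ` {..<L i}"
      unfolding rowv_def using assms(2) by auto
    moreover have "{..<L i} = insert 0 {1..<L i}" using Lp by auto
    ultimately show ?thesis by auto
  qed
  thus ?thesis unfolding Vx_def using x1 x2 x3 by blast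
qed

lemma del_wf: assumes "wfK C P r L S" "i \<in> P"
  shows "wfK (C \<union> r i ` {1..<L i}) (P - {i}) r L S"
proof -
  have "(C \<union> r i ` {1..<L i}) \<inter> rowv (P - {i}) r L = {}"
  proof -
    have "C \<inter> rowv (P - {i}) r L = {}" using assms unfolding wfK_def rowv_def by auto
    moreover have "r i ` {1..<L i} \<inter> rowv (P - {i}) r L = {}"
      using inj_r[OF assms(1)] assms(2) unfolding rowv_def by (auto; metis)
    ultimately show ?thesis by blast
  qed
  moreover have "inj_on (\<lambda>(i,j). r i j) (SIGMA i:P - {i}. {..<L i})"
    using assms unfolding wfK_def by (rule_tac inj_on_subset) auto
  ultimately show ?thesis using assms unfolding wfK_def by auto
qed

lemma del_eq: assumes "wfK C P r L S" "i \<in> P"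
  shows "del (Kc C P r L S) (r i 0) = Kc (C \<union> r i ` {1..<L i}) (P - {i}) r L S"
proof -
  have "F \<in> del (Kc C P r L S) (r i 0) \<longleftrightarrow> F \<in> Kc (C \<union> r i ` {1..<L i}) (P - {i}) r L S" for F
  proof
    assume "F \<in> del (Kc C P r L S) (r i 0)"
    thus "F \<in> Kc (C \<union> r i ` {1..<L i}) (P - {i}) r L S"
      unfolding del_def Kc_def del_V[OF assms] by blast
  next
    assume "F \<in> Kc (C \<union> r i ` {1..<L i}) (P - {i}) r L S"
    then obtain b where b: "b \<in> S" "\<forall>k\<in>P-{i}. r k (b k) \<notin> F" and F: "F \<subseteq> Vx C P r L - {r i 0}"
      unfolding Kc_def del_V[OF assms] by blast
    have "b(i:=0) \<in> S" using assms b(1) unfolding wfK_def by blast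
    moreover have "\<forall>k\<in>P. r k ((b(i:=0)) k) \<notin> F" using b(2) F by auto
    ultimately show "F \<in> del (Kc C P r L S) (r i 0)"
      unfolding del_def Kc_def using F by blast
  qed
  thus ?thesis by blast
qed

lemma degen_eq: assumes "wfK C P r L S" "i \<in> P" "\<forall>b\<in>S. b i = 0"
  shows "Kc C P r L S = del (Kc C P r L S) (r i 0)"
proof -
  have "F \<in> Kc C P r L S \<Longrightarrow> r i 0 \<notin> F" for F
  proof -
    assume "F \<in> Kc C P r L S"
    then obtain b where "b \<in> S" "\<forall>k\<in>P. r k (b k) \<notin> F" unfolding Kc_def by blast
    thus ?thesis using assms(2,3) by metis
  qed
  thus ?thesis unfolding del_def by blast
qed

lemma rowv_split: assumes "i \<in> P"
  shows "rowv P r L = rowv (P - {i}) r L \<union> r i ` {..<L i}"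
proof -
  have "(SIGMA k:P. {..<L k}) = (SIGMA k:P-{i}. {..<L k}) \<union> (SIGMA k:{i}. {..<L k})"
    using assms by auto
  moreover have "(\<lambda>(k,j). r k j) ` (SIGMA k:{i}. {..<L k}) = r i ` {..<L i}" by force
  ultimately show ?thesis unfolding rowv_def by (simp add: image_Un)
qed

lemma rowv_cong: assumes "\<And>k. k \<in> P \<Longrightarrow> r k = r' k \<and> L k = L' k"
  shows "rowv P r L = rowv P r' L'"
proof -
  have "(SIGMA k:P. {..<L k}) = (SIGMA k:P. {..<L' k})" using assms by auto
  thus ?thesis unfolding rowv_def using assms by (auto intro!: image_cong)
qed

lemma link_V: assumes "wfK C P r L S" "i \<in> P"
  shows "Vx C P (r(i := \<lambda>j. r i (Suc j))) (L(i := L i - 1)) = Vx C P r L - {r i 0}"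
proof -
  have Lp: "0 < L i" using L_pos[OF assms] .
  have x1: "r i 0 \<notin> C" using assms Lp unfolding wfK_def rowv_def by force
  have x2: "r i 0 \<notin> rowv (P - {i}) r L"
    using inj_r[OF assms(1) _ assms(2) _ Lp] unfolding rowv_def by force
  have x3: "r i 0 \<notin> r i ` {1..<L i}" using inj_r[OF assms(1) assms(2) assms(2) Lp] by force
  have e1: "rowv P r L = rowv (P - {i}) r L \<union> r i ` {..<L i}"
    using rowv_split[OF assms(2)] .
  have e2: "rowv P (r(i := \<lambda>j. r i (Suc j))) (L(i := L i - 1))
      = rowv (P - {i}) r L \<union> (\<lambda>j. r i (Suc j)) ` {..<L i - 1}"
  proof -
    have "rowv (P - {i}) (r(i := \<lambda>j. r i (Suc j))) (L(i := L i - 1)) = rowv (P - {i}) r L"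
      by (rule rowv_cong) auto
    thus ?thesis using rowv_split[OF assms(2), of "r(i := \<lambda>j. r i (Suc j))" "L(i := L i - 1)"] by simp
  qed
  have e3: "(\<lambda>j. r i (Suc j)) ` {..<L i - 1} = r i ` {1..<L i}"
  proof -
    have "Suc ` {..<L i - 1} = {1..L i - 1}" by (rule image_Suc_lessThan)
    also have "{1..L i - 1} = {1..<L i}" using Lp by auto
    finally have "{1..<L i} = Suc ` {..<L i - 1}" by simp
    thus ?thesis by (simp add: image_image)
  qed
  have e4: "{..<L i} = insert 0 {1..<L i}" using Lp by auto
  have "r i ` {..<L i} = insert (r i 0) (r i ` {1..<L i})" unfolding e4 by simp
  thus ?thesis unfolding Vx_def e1 e2 e3 using x1 x2 x3 by blast
qed

definition shiftS :: "'i \<Rightarrow> ('i \<Rightarrow> nat) set \<Rightarrow> ('i \<Rightarrow> nat) set" where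
  "shiftS i S = {b. b(i := Suc (b i)) \<in> S}"

lemma link_wf: assumes "wfK C P r L S" "i \<in> P" "b0 \<in> S" "0 < b0 i"
  shows "wfK C P (r(i := \<lambda>j. r i (Suc j))) (L(i := L i - 1)) (shiftS i S)"
proof -
  let ?r = "r(i := \<lambda>j. r i (Suc j))" and ?L = "L(i := L i - 1)"
  have inj: "inj_on (\<lambda>(k,j). ?r k j) (SIGMA k:P. {..<?L k})"
  proof (rule inj_onI, clarify)
    fix k j k' j' assume h: "k \<in> P" "j < ?L k" "k' \<in> P" "j' < ?L k'" "?r k j = ?r k' j'"
    let ?s = "\<lambda>k j. if k = i then Suc j else j"
    have "?s k j < L k" "?s k' j' < L k'" "r k (?s k j) = r k' (?s k' j')"
      using h by (auto split: if_splits)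
    from inj_r[OF assms(1) h(1) h(3) this] show "k = k' \<and> j = j'" by (auto split: if_splits)
  qed
  have sub: "rowv P ?r ?L \<subseteq> rowv P r L"
  proof
    fix v assume "v \<in> rowv P ?r ?L"
    then obtain k j where kj: "k \<in> P" "j < ?L k" "v = ?r k j" unfolding rowv_def by auto
    show "v \<in> rowv P r L"
    proof (cases "k = i")
      case True thus ?thesis using kj unfolding rowv_def
        by (auto intro!: image_eqI[where x="(i, Suc j)"])
    next
      case False thus ?thesis using kj unfolding rowv_def by auto
    qed
  qed
  have ne: "shiftS i S \<noteq> {}"
  proof -
    have "(b0(i := b0 i - 1))(i := Suc ((b0(i := b0 i - 1)) i)) = b0" using assms(4) by auto
    thus ?thesis unfolding shiftS_def using assms(3) by (metis (mono_tags) empty_iff mem_Collect_eq)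
  qed
  have bnd: "\<forall>b\<in>shiftS i S. \<forall>k\<in>P. b k < ?L k"
  proof (intro ballI)
    fix b k assume "b \<in> shiftS i S" "k \<in> P"
    hence "b(i := Suc (b i)) \<in> S" unfolding shiftS_def by simp
    hence "(b(i := Suc (b i))) k < L k" using assms(1) \<open>k \<in> P\<close> unfolding wfK_def by blast
    thus "b k < ?L k" by (cases "k = i") auto
  qed
  have dn: "\<forall>b\<in>shiftS i S. \<forall>k\<in>P. \<forall>m\<le>b k. b(k:=m) \<in> shiftS i S"
  proof (intro ballI allI impI)
    fix b k m assume b: "b \<in> shiftS i S" and k: "k \<in> P" and m: "m \<le> b k"
    have bs: "b(i := Suc (b i)) \<in> S" using b unfolding shiftS_def by simp
    have D: "\<And>c k m. c \<in> S \<Longrightarrow> k \<in> P \<Longrightarrow> m \<le> c k \<Longrightarrow> c(k:=m) \<in> S"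
      using assms(1) unfolding wfK_def by blast
    show "b(k:=m) \<in> shiftS i S"
    proof (cases "k = i")
      case True
      have "(b(i := Suc (b i)))(i := Suc m) \<in> S" using D[OF bs assms(2)] m True by simp
      thus ?thesis using True unfolding shiftS_def by simp
    next
      case False
      have "(b(i := Suc (b i)))(k := m) \<in> S" using D[OF bs k] m False by simp
      moreover have "(b(i := Suc (b i)))(k := m) = (b(k:=m))(i := Suc ((b(k:=m)) i))"
        using False by (auto simp: fun_eq_iff)
      ultimately show ?thesis unfolding shiftS_def by simp
    qed
  qed
  show ?thesis unfolding wfK_def
    using assms(1) inj sub ne bnd dn unfolding wfK_def by blast
qed

lemma link_eq: assumes "wfK C P r L S" "i \<in> P"
  shows "link (Kc C P r L S) (r i 0) = Kc C P (r(i := \<lambda>j. r i (Suc j))) (L(i := L i - 1)) (shiftS i S)"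
proof -
  let ?r = "r(i := \<lambda>j. r i (Suc j))" and ?L = "L(i := L i - 1)" and ?x = "r i 0"
  have Lp: "0 < L i" using L_pos[OF assms] .
  have bnd: "\<And>b k. b \<in> S \<Longrightarrow> k \<in> P \<Longrightarrow> b k < L k" using assms(1) unfolding wfK_def by blast
  have xV: "?x \<in> Vx C P r L" using assms(2) Lp unfolding Vx_def rowv_def by force
  have "F \<in> link (Kc C P r L S) ?x \<longleftrightarrow> F \<in> Kc C P ?r ?L (shiftS i S)" for F
  proof
    assume "F \<in> link (Kc C P r L S) ?x"
    hence F: "F \<subseteq> Vx C P r L" "?x \<notin> F" "insert ?x F \<in> Kc C P r L S" unfolding link_def Kc_def by auto
    then obtain b where b: "b \<in> S" "\<forall>k\<in>P. r k (b k) \<notin> insert ?x F" unfolding Kc_def by blast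
    have "b i \<noteq> 0" using b(2) assms(2) by (metis insertI1)
    let ?b = "b(i := b i - 1)"
    have "?b(i := Suc (?b i)) = b" using \<open>b i \<noteq> 0\<close> by auto
    hence "?b \<in> shiftS i S" unfolding shiftS_def using b(1) by simp
    moreover have "\<forall>k\<in>P. ?r k (?b k) \<notin> F" using b(2) \<open>b i \<noteq> 0\<close> by auto
    moreover have "F \<subseteq> Vx C P ?r ?L" using F link_V[OF assms] by blast
    ultimately show "F \<in> Kc C P ?r ?L (shiftS i S)" unfolding Kc_def by blast
  next
    assume "F \<in> Kc C P ?r ?L (shiftS i S)"
    then obtain b where b: "b(i := Suc (b i)) \<in> S" "\<forall>k\<in>P. ?r k (b k) \<notin> F"
      and F: "F \<subseteq> Vx C P r L - {?x}" unfolding Kc_def shiftS_def link_V[OF assms] by blast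
    let ?b = "b(i := Suc (b i))"
    have "\<forall>k\<in>P. r k (?b k) \<notin> insert ?x F"
    proof
      fix k assume k: "k \<in> P"
      have "r k (?b k) \<noteq> ?x"
      proof
        assume "r k (?b k) = ?x"
        from inj_r[OF assms(1) k assms(2) bnd[OF b(1) k] Lp this] show False by auto
      qed
      moreover have "r k (?b k) \<notin> F" using b(2) k by (cases "k = i") auto
      ultimately show "r k (?b k) \<notin> insert ?x F" by simp
    qed
    hence "insert ?x F \<in> Kc C P r L S" "F \<in> Kc C P r L S"
      using b(1) F xV unfolding Kc_def by blast+
    thus "F \<in> link (Kc C P r L S) ?x" using F unfolding link_def by blast
  qed
  thus ?thesis by blast
qed

lemma xV: assumes "wfK C P r L S" "i \<in> P" shows "r i 0 \<in> Vx C P r L"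
  using assms L_pos[OF assms] unfolding Vx_def rowv_def by force

lemma vdK: "wfK C P r L S \<Longrightarrow> vertex_decomposable (Kc C P r L S)"
proof (induction "sum L P" arbitrary: C P r L S rule: less_induct)
  case less
  note wf = less.prems
  have finP: "finite P" and finC: "finite C" and Sne: "S \<noteq> {}" using wf unfolding wfK_def by auto
  show ?case
  proof (cases "P = {}")
    case True
    have "Kc C P r L S = Pow C"
      using True Sne unfolding Kc_def Vx_def rowv_def by auto
    thus ?thesis using finC vertex_decomposable.simplex by metis
  next
    case False
    then obtain i where i: "i \<in> P" by blast
    have Lp: "0 < L i" using L_pos[OF wf i] .
    have sumP: "sum L P = L i + sum L (P - {i})" using sum.remove[OF finP i] .
    have IHdel: "vertex_decomposable (Kc (C \<union> r i ` {1..<L i}) (P - {i}) r L S)"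
      using less.hyps[OF _ del_wf[OF wf i]] sumP Lp by simp
    show ?thesis
    proof (cases "\<forall>b\<in>S. b i = 0")
      case True
      thus ?thesis using degen_eq[OF wf i True] del_eq[OF wf i] IHdel by simp
    next
      case False
      then obtain b0 where b0: "b0 \<in> S" "0 < b0 i" by auto
      let ?r = "r(i := \<lambda>j. r i (Suc j))" and ?L = "L(i := L i - 1)" and ?x = "r i 0"
      have wfl: "wfK C P ?r ?L (shiftS i S)" using link_wf[OF wf i b0] .
      have "sum ?L P = ?L i + sum ?L (P - {i})" using sum.remove[OF finP i] .
      moreover have "sum ?L (P - {i}) = sum L (P - {i})" by (rule sum.cong) auto
      ultimately have "sum ?L P < sum L P" using sumP Lp by simp
      hence IHlink: "vertex_decomposable (Kc C P ?r ?L (shiftS i S))"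
        using less.hyps[OF _ wfl] by simp
      have bnd: "b0 k < L k" if "k \<in> P" for k using wf b0(1) that unfolding wfK_def by blast
      have sing: "{?x} \<in> Kc C P r L S"
      proof -
        have "\<forall>k\<in>P. r k (b0 k) \<notin> {?x}"
        proof
          fix k assume k: "k \<in> P"
          show "r k (b0 k) \<notin> {?x}"
          proof
            assume "r k (b0 k) \<in> {?x}"
            hence "r k (b0 k) = ?x" by simp
            from inj_r[OF wf k i bnd[OF k] Lp this] b0(2) show False by auto
          qed
        qed
        thus ?thesis using xV[OF wf i] b0(1) unfolding Kc_def by blast
      qed
      have finV: "finite (Vx C P r L)" using finite_V[OF wf] .
      have cV: "card (Vx C P r L - {?x}) = card (Vx C P r L) - 1"
        using xV[OF wf i] finV by simp
      have cV1: "card (Vx C P r L) \<ge> 1" using xV[OF wf i] finV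
        by (metis One_nat_def Suc_leI card_gt_0_iff empty_iff)
      have cP: "card (P - {i}) = card P - 1" using i finP by simp
      have cP1: "card P \<ge> 1" using i finP
        by (metis One_nat_def Suc_leI card_gt_0_iff empty_iff)
      have d0: "sc_dim (Kc C P r L S) = int (card (Vx C P r L)) - int (card P) - 1"
        using dimK[OF wf] .
      have dl: "sc_dim (link (Kc C P r L S) ?x) = sc_dim (Kc C P r L S) - 1"
        unfolding link_eq[OF wf i] dimK[OF wfl] link_V[OF wf i] d0 cV using cV1 by simp
      have dd: "sc_dim (del (Kc C P r L S) ?x) = sc_dim (Kc C P r L S)"
        unfolding del_eq[OF wf i] dimK[OF del_wf[OF wf i]] del_V[OF wf i] d0 cV cP
        using cV1 cP1 by simp
      show ?thesis
        by (rule vertex_decomposable.step[OF pureK[OF wf] sing dl _ dd])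
           (use IHlink IHdel link_eq[OF wf i] del_eq[OF wf i] in simp_all)
    qed
  qed
qed

definition ev :: "nat \<Rightarrow> nat \<Rightarrow> nat \<Rightarrow> nat" where
  "ev i k = (\<lambda>t. if t = i then k else 0)"

lemma mon_supp: "P \<subseteq> {1..n} \<Longrightarrow> \<forall>t. t \<notin> P \<longrightarrow> b t = 0 \<Longrightarrow> b \<in> monomials n"
  unfolding monomials_def by blast

lemma exists_min_gen:
  assumes "monomial_ideal n A" "a \<in> A"
  shows "\<exists>g\<in>min_gens A. mon_dvd g a"
  using assms(2)
proof (induction "sum a {1..n}" arbitrary: a rule: less_induct)
  case less
  show ?case
  proof (cases "a \<in> min_gens A")
    case True thus ?thesis by (auto simp: mon_dvd_def)
  next
    case False
    then obtain b where b: "b \<in> A" "mon_dvd b a" "b \<noteq> a" using less.prems unfolding min_gens_def by blast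
    have am: "a \<in> monomials n" "b \<in> monomials n" using assms(1) less.prems b(1) unfolding monomial_ideal_def by auto
    obtain t where t: "b t \<noteq> a t" using b(3) by blast
    have "t \<in> {1..n}"
    proof (rule ccontr)
      assume "t \<notin> {1..n}"
      hence "a t = 0" "b t = 0" using am unfolding monomials_def by blast+
      thus False using t by simp
    qed
    moreover have le: "\<forall>s. b s \<le> a s" using b(2) unfolding mon_dvd_def by blast
    ultimately have "sum b {1..n} < sum a {1..n}"
    proof (intro sum_strict_mono_ex1)
      show "\<forall>x\<in>{1..n}. b x \<le> a x" using le by blast
      show "\<exists>x\<in>{1..n}. b x < a x" using \<open>t \<in> {1..n}\<close> t le le_neq_implies_less by blast
    qed simp
    then obtain g where "g \<in> min_gens A" "mon_dvd g b" using less.hyps b(1) by blast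
    thus ?thesis using b(2) unfolding mon_dvd_def by (meson order_trans)
  qed
qed

lemma main_app:
  assumes pr: "primary_monomial_ideal n A"
  shows "vertex_decomposable
           (stanley_reisner (polarization_vars n A) (polarization_gens n A))"
proof -
  have MI: "monomial_ideal n A" and Z: "(\<lambda>_. 0) \<notin> A" using pr unfolding primary_monomial_ideal_def by auto
  obtain P where P: "P \<subseteq> {1..n}"
    and rad: "\<forall>m\<in>monomials n. m \<in> mon_radical A \<longleftrightarrow> (\<exists>i\<in>P. 0 < m i)"
    and gz: "\<forall>g\<in>min_gens A. \<forall>i. i \<notin> P \<longrightarrow> g i = 0"
    using pr unfolding primary_monomial_ideal_def by blast
  have Amon: "A \<subseteq> monomials n" and up: "\<And>a b. a \<in> A \<Longrightarrow> b \<in> monomials n \<Longrightarrow> mon_dvd a b \<Longrightarrow> b \<in> A"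
    using MI unfolding monomial_ideal_def by auto
  define G where "G = min_gens A"
  have GA: "G \<subseteq> A" unfolding G_def min_gens_def by auto
  have Gmin: "\<And>g b. g \<in> G \<Longrightarrow> b \<in> A \<Longrightarrow> mon_dvd b g \<Longrightarrow> b = g" unfolding G_def min_gens_def by auto
  have pp: "\<exists>k. ev i k \<in> A" if i: "i \<in> P" for i
  proof -
    have "ev i 1 \<in> monomials n" using i P unfolding ev_def monomials_def by auto
    moreover have "0 < ev i 1 i" by (simp add: ev_def)
    ultimately have "ev i 1 \<in> mon_radical A" using rad i by blast
    then obtain k where "(\<lambda>t. k * ev i 1 t) \<in> A" unfolding mon_radical_def by blast
    moreover have "(\<lambda>t. k * ev i 1 t) = ev i k" by (auto simp: ev_def)
    ultimately show ?thesis by auto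
  qed
  define L where "L i = (LEAST k. ev i k \<in> A)" for i
  have LA: "ev i (L i) \<in> A" if "i \<in> P" for i
    using pp[OF that] unfolding L_def by (metis LeastI)
  have evmon: "ev i k \<in> monomials n" if "i \<in> P" for i k
    using that P unfolding ev_def monomials_def by auto
  have LG: "ev i (L i) \<in> G" if i: "i \<in> P" for i
  proof -
    have "b = ev i (L i)" if b: "b \<in> A" "mon_dvd b (ev i (L i))" for b
    proof -
      have "\<forall>t. t \<noteq> i \<longrightarrow> b t = 0" using b(2) unfolding mon_dvd_def ev_def by (metis le_zero_eq)
      hence beq: "b = ev i (b i)" unfolding ev_def by auto
      have "b i \<le> L i" using b(2) unfolding mon_dvd_def ev_def by (metis)
      moreover have "L i \<le> b i" using b(1) beq unfolding L_def by (metis Least_le)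
      ultimately show ?thesis using beq by simp
    qed
    thus ?thesis using LA[OF i] unfolding G_def min_gens_def by blast
  qed
  have gL: "g i \<le> L i" if g: "g \<in> G" and i: "i \<in> P" for g i
  proof (rule ccontr)
    assume "\<not> g i \<le> L i"
    hence "mon_dvd (ev i (L i)) g" unfolding mon_dvd_def ev_def by auto
    hence "ev i (L i) = g" using Gmin[OF g LA[OF i]] by simp
    thus False using \<open>\<not> g i \<le> L i\<close> by (auto simp: ev_def)
  qed
  have gP: "g t = 0" if "g \<in> G" "t \<notin> P" for g t using gz that unfolding G_def by blast
  define r :: "nat \<Rightarrow> nat \<Rightarrow> nat \<times> nat" where "r i j = (i, Suc j)" for i j
  define S where "S = {b. (\<forall>t. t \<notin> P \<longrightarrow> b t = 0) \<and> b \<notin> A}"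
  have finP: "finite P" using P finite_subset by blast
  have bndS: "b i < L i" if "b \<in> S" "i \<in> P" for b i
  proof (rule ccontr)
    assume "\<not> b i < L i"
    hence "mon_dvd (ev i (L i)) b" unfolding mon_dvd_def ev_def by auto
    moreover have "b \<in> monomials n" using that(1) mon_supp[OF P] unfolding S_def by blast
    ultimately have "b \<in> A" using up LA[OF that(2)] by blast
    thus False using that(1) unfolding S_def by blast
  qed
  have wf: "wfK {} P r L S"
    unfolding wfK_def
  proof (intro conjI)
    show "inj_on (\<lambda>(i, j). r i j) (SIGMA i:P. {..<L i})" unfolding r_def inj_on_def by auto
    show "S \<noteq> {}" using Z unfolding S_def by auto
    show "\<forall>b\<in>S. \<forall>i\<in>P. b i < L i" using bndS by blast
    show "\<forall>b\<in>S. \<forall>i\<in>P. \<forall>k\<le>b i. b(i := k) \<in> S"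
    proof (intro ballI allI impI)
      fix b i k assume b: "b \<in> S" and i: "i \<in> P" and k: "k \<le> b i"
      have s: "\<forall>t. t \<notin> P \<longrightarrow> (b(i:=k)) t = 0" using b i unfolding S_def by auto
      have "b(i:=k) \<notin> A"
      proof
        assume "b(i:=k) \<in> A"
        moreover have "mon_dvd (b(i:=k)) b" using k unfolding mon_dvd_def by auto
        moreover have "b \<in> monomials n" using b mon_supp[OF P] unfolding S_def by blast
        ultimately have "b \<in> A" using up by blast
        thus False using b unfolding S_def by blast
      qed
      thus "b(i := k) \<in> S" using s unfolding S_def by blast
    qed
  qed (use finP in auto)
  have V: "polarization_vars n A = Vx {} P r L"
  proof
    show "polarization_vars n A \<subseteq> Vx {} P r L"
    proof
      fix v assume "v \<in> polarization_vars n A"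
      then obtain g where g: "g \<in> G" "v \<in> polarize_mon n g"
        unfolding polarization_vars_def polarization_gens_def G_def by blast
      then obtain i j where v: "v = (i, j)" "i \<in> {1..n}" "1 \<le> j" "j \<le> g i"
        unfolding polarize_mon_def by blast
      have iP: "i \<in> P" using gP[OF g(1)] v by (metis not_one_le_zero le_trans)
      have "j - 1 < L i" using gL[OF g(1) iP] v by auto
      moreover have "v = r i (j - 1)" using v unfolding r_def by auto
      ultimately show "v \<in> Vx {} P r L" unfolding Vx_def rowv_def using iP by force
    qed
  next
    show "Vx {} P r L \<subseteq> polarization_vars n A"
    proof
      fix v assume "v \<in> Vx {} P r L"
      then obtain i j where v: "i \<in> P" "j < L i" "v = (i, Suc j)"
        unfolding Vx_def rowv_def r_def by auto
      have "v \<in> polarize_mon n (ev i (L i))" using v P unfolding polarize_mon_def ev_def by auto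
      thus "v \<in> polarization_vars n A" using LG[OF v(1)]
        unfolding polarization_vars_def polarization_gens_def G_def by blast
    qed
  qed
  have SR: "stanley_reisner (polarization_vars n A) (polarization_gens n A) = Kc {} P r L S"
  proof -
    have "(\<not> (\<exists>g\<in>G. polarize_mon n g \<subseteq> F)) \<longleftrightarrow> (\<exists>b\<in>S. \<forall>i\<in>P. r i (b i) \<notin> F)"
      if F: "F \<subseteq> Vx {} P r L" for F
    proof
      assume nF: "\<not> (\<exists>g\<in>G. polarize_mon n g \<subseteq> F)"
      define b where "b t = (if t \<in> P then (LEAST j. (t, Suc j) \<notin> F) else 0)" for t
      have out: "(t, Suc (L t)) \<notin> F" if "t \<in> P" for t
        using F unfolding Vx_def rowv_def r_def by force
      have b1: "(t, Suc (b t)) \<notin> F" if "t \<in> P" for t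
        using out[OF that] that unfolding b_def by (simp, metis (mono_tags, lifting) LeastI)
      have b2: "(t, Suc j) \<in> F" if "t \<in> P" "j < b t" for t j
        using that unfolding b_def by (metis (mono_tags, lifting) not_less_Least)
      have b0: "\<forall>t. t \<notin> P \<longrightarrow> b t = 0" unfolding b_def by auto
      have "b \<notin> A"
      proof
        assume "b \<in> A"
        then obtain g where g: "g \<in> G" "mon_dvd g b" using exists_min_gen[OF MI] unfolding G_def by blast
        have "polarize_mon n g \<subseteq> F"
        proof
          fix v assume "v \<in> polarize_mon n g"
          then obtain t j where v: "v = (t, j)" "1 \<le> j" "j \<le> g t" unfolding polarize_mon_def by blast
          have gb: "g t \<le> b t" using g(2) unfolding mon_dvd_def by blast
          hence tP: "t \<in> P" using b0 v by (metis le_zero_eq not_one_le_zero le_trans)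
          have "j - 1 < b t" using v gb by linarith
          hence "(t, Suc (j - 1)) \<in> F" using b2[OF tP] by blast
          moreover have "Suc (j - 1) = j" using v by linarith
          ultimately show "v \<in> F" using v by simp
        qed
        thus False using nF g(1) by blast
      qed
      hence "b \<in> S" using b0 unfolding S_def by blast
      thus "\<exists>b\<in>S. \<forall>i\<in>P. r i (b i) \<notin> F" using b1 unfolding r_def by blast
    next
      assume "\<exists>b\<in>S. \<forall>i\<in>P. r i (b i) \<notin> F"
      then obtain b where b: "b \<in> S" "\<forall>i\<in>P. (i, Suc (b i)) \<notin> F" unfolding r_def by blast
      show "\<not> (\<exists>g\<in>G. polarize_mon n g \<subseteq> F)"
      proof
        assume "\<exists>g\<in>G. polarize_mon n g \<subseteq> F"
        then obtain g where g: "g \<in> G" "polarize_mon n g \<subseteq> F" by blast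
        have "g t \<le> b t" for t
        proof (cases "t \<in> P")
          case False thus ?thesis using gP[OF g(1)] by simp
        next
          case True
          show ?thesis
          proof (rule ccontr)
            assume "\<not> g t \<le> b t"
            hence "(t, Suc (b t)) \<in> polarize_mon n g" using True P unfolding polarize_mon_def by auto
            thus False using g(2) b(2) True by blast
          qed
        qed
        hence "mon_dvd g b" unfolding mon_dvd_def by blast
        moreover have "b \<in> monomials n" using b(1) mon_supp[OF P] unfolding S_def by blast
        ultimately have "b \<in> A" using up GA g(1) by blast
        thus False using b(1) unfolding S_def by blast
      qed
    qed
    thus ?thesis
      unfolding stanley_reisner_def Kc_def sqfree_in_ideal_def V polarization_gens_def G_def
      by auto
  qed
  show ?thesis unfolding SR using vdK[OF wf] .
qed

theorem proposition3p4:
  fixes n :: nat and A :: "(nat \<Rightarrow> nat) set"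
  assumes "primary_monomial_ideal n A"
  shows "vertex_decomposable
           (stanley_reisner (polarization_vars n A) (polarization_gens n A))"
  using main_app[OF assms] .

end
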